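(* Let $\alpha,\beta>0$, let $c(\psi)=\sqrt{\alpha\cos^2\psi+\beta\sin^2\psi}$, let $p\ge0$ be an integer, and let $X_{\Delta x}^p(\Omega)$ be the discontinuous piecewise polynomial space on the periodic mesh described in the context. Suppose $v,w,\psi:[0,T]\to X_{\Delta x}^p(\Omega)$ are differentiable in time and, for every $t\in[0,T]$, satisfy (with $c=c(\psi(x,t))$ inside integrals, $x$-derivatives taken cellwise, sums over $j=1,\dots,N$) $$\sum_j\int_{\Omega_j}v_t\phi\,dx+\sum_j\int_{\Omega_j}c\,w\phi_x\,dx-\sum_j\overline{c}_{j+1/2}\overline{w}_{j+1/2}\phi^-_{j+1/2}+\sum_j\overline{c}_{j-1/2}\overline{w}_{j-1/2}\phi^+_{j-1/2}=\sum_j\int_{\Omega_j}c\,(w\phi)_x\,dx-\sum_j\overline{c}_{j+1/2}w^-_{j+1/2}\phi^-_{j+1/2}+\sum_j\overline{c}_{j-1/2}w^+_{j-1/2}\phi^+_{j-1/2},$$ $$\sum_j\int_{\Omega_j}w_t\eta\,dx+\sum_j\int_{\Omega_j}c\,v\eta_x\,dx-\sum_j\overline{c}_{j+1/2}\overline{v}_{j+1/2}\eta^-_{j+1/2}+\sum_j\overline{c}_{j-1/2}\overline{v}_{j-1/2}\eta^+_{j-1/2}=0,$$ $$\sum_j\int_{\Omega_j}\psi_t\zeta\,dx=\sum_j\int_{\Omega_j}v\zeta\,dx,$$ for all $\phi,\eta,\zeta\in X_{\Delta x}^p(\Omega)$. Then $$\frac{d}{dt}\left(\sum_{j=1}^N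\int_{\Omega_j}(v^2+w^2)\,dx\right)=0.$$
   Context: The domain $\Omega$ is partitioned into cells $\Omega_j=[x_{j-1/2},x_{j+1/2}]$, $j=1,\dots,N$. $X_{\Delta x}^p(\Omega)=\{u\in L^2(\Omega): u|_{\Omega_j}$ is a polynomial of degree $\le p$ for each $j\}$. For a grid function $u$, $u^+_{j+1/2}$ and $u^-_{j+1/2}$ denote its traces at $x_{j+1/2}$ from the right and left respectively; $\overline{u}_{j+1/2}=(u^+_{j+1/2}+u^-_{j+1/2})/2$ and $\llbracket u\rrbracket_{j+1/2}=u^+_{j+1/2}-u^-_{j+1/2}$. Also $c^\pm_{j+1/2}=c(\psi^\pm_{j+1/2})$ and $\overline{c}_{j+1/2}=(c^+_{j+1/2}+c^-_{j+1/2})/2$. Periodic boundary conditions: the endpoints $x_{1/2}$ and $x_{N+1/2}$ are identified, i.e. $u^-_{1/2}:=u^-_{N+1/2}$ (trace from cell $N$) and $u^+_{N+1/2}:=u^+_{1/2}$ (trace from cell $1$), for all grid functions including $\psi$ and the test functions. *)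

theory Defs
  imports "HOL-Analysis.Analysis" "HOL-Computational_Algebra.Polynomial"
begin

(* Mesh: nodes xs 0 = x_{1/2} < xs 1 = x_{3/2} < ... < xs N = x_{N+1/2}.
   Cell j (j = 1..N) is [xs (j-1), xs j].
   A grid function u in X^p is represented by its cell polynomials U j, j = 1..N. *)

definition mesh :: "(nat \<Rightarrow> real) \<Rightarrow> nat \<Rightarrow> bool" where
  "mesh xs N \<longleftrightarrow> N \<ge> 1 \<and> (\<forall>j<N. xs j < xs (Suc j))"

definition Xsp :: "nat \<Rightarrow> nat \<Rightarrow> (nat \<Rightarrow> real poly) set" where
  "Xsp N p = {U. \<forall>j\<in>{1..N}. degree (U j) \<le> p}"

(* u^-_{j+1/2}, j = 0..N, with periodic convention u^-_{1/2} = u^-_{N+1/2} *)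
definition trm :: "(nat \<Rightarrow> real) \<Rightarrow> nat \<Rightarrow> (nat \<Rightarrow> real poly) \<Rightarrow> nat \<Rightarrow> real" where
  "trm xs N U j = (if j = 0 then poly (U N) (xs N) else poly (U j) (xs j))"

(* u^+_{j+1/2}, j = 0..N, with periodic convention u^+_{N+1/2} = u^+_{1/2} *)
definition trp :: "(nat \<Rightarrow> real) \<Rightarrow> nat \<Rightarrow> (nat \<Rightarrow> real poly) \<Rightarrow> nat \<Rightarrow> real" where
  "trp xs N U j = (if j = N then poly (U 1) (xs 0) else poly (U (Suc j)) (xs j))"

definition avg :: "(nat \<Rightarrow> real) \<Rightarrow> nat \<Rightarrow> (nat \<Rightarrow> real poly) \<Rightarrow> nat \<Rightarrow> real" where
  "avg xs N U j = (trp xs N U j + trm xs N U j) / 2"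

definition cfun :: "real \<Rightarrow> real \<Rightarrow> real \<Rightarrow> real" where
  "cfun \<alpha> \<beta> \<psi> = sqrt (\<alpha> * (cos \<psi>)\<^sup>2 + \<beta> * (sin \<psi>)\<^sup>2)"

definition cbar :: "real \<Rightarrow> real \<Rightarrow> (nat \<Rightarrow> real) \<Rightarrow> nat \<Rightarrow> (nat \<Rightarrow> real poly) \<Rightarrow> nat \<Rightarrow> real" where
  "cbar \<alpha> \<beta> xs N \<Psi> j = (cfun \<alpha> \<beta> (trp xs N \<Psi> j) + cfun \<alpha> \<beta> (trm xs N \<Psi> j)) / 2"

definition cint :: "(nat \<Rightarrow> real) \<Rightarrow> nat \<Rightarrow> (real \<Rightarrow> real) \<Rightarrow> real" where
  "cint xs j f = integral {xs (j - 1)..xs j} f"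

end

theory Submission
  imports Defs "HOL-Analysis.Analysis" "HOL-Computational_Algebra.Polynomial"
begin



definition zpt :: "real \<Rightarrow> real \<Rightarrow> nat \<Rightarrow> nat \<Rightarrow> real" where
  "zpt a b p k = a + (b - a) * (real k + 1) / (real p + 2)"

definition lag :: "real \<Rightarrow> real \<Rightarrow> nat \<Rightarrow> nat \<Rightarrow> real poly" where
  "lag a b p k = (\<Prod>m\<in>{..p}-{k}. smult (1 / (zpt a b p k - zpt a b p m)) [:- zpt a b p m, 1:])"

lemma zpt_inj: assumes "a < b" "zpt a b p k = zpt a b p m" shows "k = m"
proof -
  have "(b - a) * (real k + 1) / (real p + 2) = (b - a) * (real m + 1) / (real p + 2)"
    using assms(2) unfolding zpt_def by simp
  hence "(b - a) * (real k + 1) = (b - a) * (real m + 1)"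
    by (simp add: divide_simps)
  hence "real k + 1 = real m + 1" using assms(1) by simp
  thus ?thesis by simp
qed

lemma zpt_in: assumes "a < b" "k \<le> p" shows "zpt a b p k \<in> {a..b}"
proof -
  have h: "0 \<le> (real k + 1) / (real p + 2)" "(real k + 1) / (real p + 2) \<le> 1"
    using assms(2) by (auto simp: divide_simps)
  have "zpt a b p k = a + (b - a) * ((real k + 1) / (real p + 2))" unfolding zpt_def by simp
  moreover have "0 \<le> (b - a) * ((real k + 1) / (real p + 2))" using h assms(1) by simp
  moreover have "(b - a) * ((real k + 1) / (real p + 2)) \<le> (b - a)"
    using mult_left_mono[OF h(2), of "b - a"] assms(1) by simp
  ultimately show ?thesis by auto
qed

lemma lag_at: assumes "a < b" "k \<le> p" "m \<le> p"
  shows "poly (lag a b p k) (zpt a b p m) = (if k = m then 1 else 0)"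
proof (cases "k = m")
  case True
  have "poly (lag a b p k) (zpt a b p m) = (\<Prod>i\<in>{..p}-{k}. 1)"
    unfolding lag_def poly_prod
  proof (rule prod.cong)
    fix i assume "i \<in> {..p}-{k}"
    hence "zpt a b p k \<noteq> zpt a b p i" using zpt_inj[OF assms(1)] by auto
    thus "poly (smult (1 / (zpt a b p k - zpt a b p i)) [:- zpt a b p i, 1:]) (zpt a b p m) = 1"
      using True by (simp add: diff_divide_distrib[symmetric])
  qed simp
  thus ?thesis using True by simp
next
  case False
  have "poly (lag a b p k) (zpt a b p m) = 0"
    unfolding lag_def poly_prod
    by (rule prod_zero) (use False assms in auto)
  thus ?thesis using False by simp
qed

lemma lag_deg: assumes "k \<le> p" shows "degree (lag a b p k) \<le> p"
proof -
  have "degree (lag a b p k) \<le> (\<Sum>m\<in>{..p}-{k}. 1)"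
    unfolding lag_def
  proof (rule order.trans[OF degree_prod_sum_le], simp, rule sum_mono)
    fix m
    show "(degree \<circ> (\<lambda>m. smult (1 / (zpt a b p k - zpt a b p m)) [:- zpt a b p m, 1:])) m \<le> 1"
      unfolding o_def by (rule order.trans[OF degree_smult_le]) simp
  qed
  also have "\<dots> = p" using assms by simp
  finally show ?thesis .
qed

lemma interp: assumes "a < b" "degree Q \<le> p"
  shows "poly Q x = (\<Sum>k\<le>p. poly Q (zpt a b p k) * poly (lag a b p k) x)"
proof -
  let ?R = "(\<Sum>k\<le>p. smult (poly Q (zpt a b p k)) (lag a b p k))"
  have "Q = ?R"
  proof (rule poly_eqI_degree[where A = "zpt a b p ` {..p}"])
    fix y assume "y \<in> zpt a b p ` {..p}"
    then obtain m where m: "m \<le> p" "y = zpt a b p m" by auto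
    have "poly ?R y = (\<Sum>k\<le>p. poly Q (zpt a b p k) * (if k = m then 1 else 0))"
      unfolding poly_sum using m lag_at[OF assms(1)] by simp
    also have "\<dots> = poly Q y" using m by (simp add: if_distrib cong: if_cong)
    finally show "poly Q y = poly ?R y" by simp
  next
    have "card (zpt a b p ` {..p}) = Suc p"
      by (subst card_image) (auto intro: inj_onI zpt_inj[OF assms(1)])
    thus "degree Q < card (zpt a b p ` {..p})" using assms by simp
    have "degree ?R \<le> p"
      by (rule degree_sum_le) (simp, meson atMost_iff order.trans degree_smult_le lag_deg)
    thus "degree ?R < card (zpt a b p ` {..p})" using \<open>card _ = _\<close> by simp
  qed
  hence "poly Q x = poly ?R x" by simp
  thus ?thesis by (simp add: poly_sum)
qed




lemma prodint:
  fixes A B :: "nat \<Rightarrow> real" and l :: "nat \<Rightarrow> real poly"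
  shows "integral {a..b} (\<lambda>x. (\<Sum>k\<le>p. A k * poly (l k) x) * (\<Sum>m\<le>p. B m * poly (l m) x))
     = (\<Sum>k\<le>p. \<Sum>m\<le>p. A k * B m * integral {a..b} (\<lambda>x. poly (l k) x * poly (l m) x))"
proof -
  have "integral {a..b} (\<lambda>x. (\<Sum>k\<le>p. A k * poly (l k) x) * (\<Sum>m\<le>p. B m * poly (l m) x))
     = integral {a..b} (\<lambda>x. \<Sum>k\<le>p. \<Sum>m\<le>p. A k * B m * (poly (l k) x * poly (l m) x))"
    by (simp add: sum_product mult_ac)
  also have "\<dots> = (\<Sum>k\<le>p. integral {a..b} (\<lambda>x. \<Sum>m\<le>p. A k * B m * (poly (l k) x * poly (l m) x)))"
    by (rule integral_sum) (auto intro!: integrable_continuous_interval continuous_intros)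
  also have "\<dots> = (\<Sum>k\<le>p. \<Sum>m\<le>p. integral {a..b} (\<lambda>x. A k * B m * (poly (l k) x * poly (l m) x)))"
    by (intro sum.cong refl integral_sum) (auto intro!: integrable_continuous_interval continuous_intros)
  also have "\<dots> = (\<Sum>k\<le>p. \<Sum>m\<le>p. A k * B m * integral {a..b} (\<lambda>x. poly (l k) x * poly (l m) x))"
    by simp
  finally show ?thesis .
qed

lemma cell_deriv:
  fixes q :: "real \<Rightarrow> real poly" and qt :: "real poly"
  assumes ab: "a < b" and tS: "t \<in> S" and nb: "at t within S \<noteq> bot"
    and deg: "\<And>s. s \<in> S \<Longrightarrow> degree (q s) \<le> p"
    and der: "\<And>x. x \<in> {a..b} \<Longrightarrow> ((\<lambda>s. poly (q s) x) has_real_derivative poly qt x) (at t within S)"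
  shows "((\<lambda>s. integral {a..b} (\<lambda>x. (poly (q s) x)\<^sup>2)) has_real_derivative
           2 * integral {a..b} (\<lambda>x. poly qt x * poly (q t) x)) (at t within S)"
proof -
  define z where "z = zpt a b p"
  define l where "l = lag a b p"
  define K where "K k m = integral {a..b} (\<lambda>x. poly (l k) x * poly (l m) x)" for k m
  define c where "c k s = poly (q s) (z k)" for k s
  define c' where "c' k = poly qt (z k)" for k
  have rep: "poly (q s) x = (\<Sum>k\<le>p. c k s * poly (l k) x)" if "s \<in> S" for s x
    unfolding c_def z_def l_def using interp[OF ab deg[OF that]] .
  have cd: "((\<lambda>s. c k s) has_real_derivative c' k) (at t within S)" if "k \<le> p" for k
    unfolding c_def c'_def z_def using der[OF zpt_in[OF ab that]] .
  have qtrep: "poly qt x = (\<Sum>k\<le>p. c' k * poly (l k) x)" if "x \<in> {a..b}" for x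
  proof -
    have "((\<lambda>s. \<Sum>k\<le>p. c k s * poly (l k) x) has_real_derivative (\<Sum>k\<le>p. c' k * poly (l k) x)) (at t within S)"
      by (intro DERIV_sum DERIV_cmult_right cd) simp
    hence "((\<lambda>s. poly (q s) x) has_real_derivative (\<Sum>k\<le>p. c' k * poly (l k) x)) (at t within S)"
      by (rule has_field_derivative_transform_within[OF _ zero_less_one tS]) (simp add: rep)
    thus ?thesis using has_field_derivative_unique[OF der[OF that] _ nb] by blast
  qed
  define G where "G s = (\<Sum>k\<le>p. \<Sum>m\<le>p. c k s * c m s * K k m)" for s
  have Gd: "(G has_real_derivative (\<Sum>k\<le>p. \<Sum>m\<le>p. (c' k * c m t + c k t * c' m) * K k m)) (at t within S)"
    unfolding G_def by (intro DERIV_sum DERIV_cmult_right) (use DERIV_mult[OF cd cd] in \<open>auto simp: mult.commute\<close>)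
  have GS: "G s = integral {a..b} (\<lambda>x. (poly (q s) x)\<^sup>2)" if "s \<in> S" for s
  proof -
    have "integral {a..b} (\<lambda>x. (poly (q s) x)\<^sup>2) =
          integral {a..b} (\<lambda>x. (\<Sum>k\<le>p. c k s * poly (l k) x) * (\<Sum>m\<le>p. c m s * poly (l m) x))"
      by (simp add: rep[OF that] power2_eq_square)
    also have "\<dots> = G s" unfolding G_def K_def by (rule prodint)
    finally show ?thesis by simp
  qed
  have val: "(\<Sum>k\<le>p. \<Sum>m\<le>p. (c' k * c m t + c k t * c' m) * K k m)
      = 2 * integral {a..b} (\<lambda>x. poly qt x * poly (q t) x)"
  proof -
    have "integral {a..b} (\<lambda>x. poly qt x * poly (q t) x) =
          integral {a..b} (\<lambda>x. (\<Sum>k\<le>p. c' k * poly (l k) x) * (\<Sum>m\<le>p. c m t * poly (l m) x))"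
      by (rule integral_cong) (simp add: qtrep rep[OF tS])
    also have "\<dots> = (\<Sum>k\<le>p. \<Sum>m\<le>p. c' k * c m t * K k m)" unfolding K_def by (rule prodint)
    finally have i: "integral {a..b} (\<lambda>x. poly qt x * poly (q t) x) = (\<Sum>k\<le>p. \<Sum>m\<le>p. c' k * c m t * K k m)" .
    have Ks: "K k m = K m k" for k m unfolding K_def by (simp add: mult.commute)
    have "(\<Sum>k\<le>p. \<Sum>m\<le>p. c k t * c' m * K k m) = (\<Sum>m\<le>p. \<Sum>k\<le>p. c k t * c' m * K k m)"
      by (rule sum.swap)
    also have "\<dots> = (\<Sum>k\<le>p. \<Sum>m\<le>p. c' k * c m t * K k m)"
      by (simp add: Ks mult_ac)
    finally have sw: "(\<Sum>k\<le>p. \<Sum>m\<le>p. c k t * c' m * K k m) = (\<Sum>k\<le>p. \<Sum>m\<le>p. c' k * c m t * K k m)" .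
    have "(\<Sum>k\<le>p. \<Sum>m\<le>p. (c' k * c m t + c k t * c' m) * K k m)
       = (\<Sum>k\<le>p. \<Sum>m\<le>p. c' k * c m t * K k m) + (\<Sum>k\<le>p. \<Sum>m\<le>p. c k t * c' m * K k m)"
      by (simp add: distrib_right sum.distrib)
    thus ?thesis using sw i by simp
  qed
  show ?thesis
    using has_field_derivative_transform_within[OF Gd zero_less_one tS, of "\<lambda>s. integral {a..b} (\<lambda>x. (poly (q s) x)\<^sup>2)"] GS val
    by simp
qed

theorem proposition2p3:
  fixes \<alpha> \<beta> T :: real and p N :: nat and xs :: "nat \<Rightarrow> real"
    and v w \<psi> vt wt \<psi>t :: "real \<Rightarrow> nat \<Rightarrow> real poly"
  assumes "\<alpha> > 0" and "\<beta> > 0" and "mesh xs N"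
    and inX: "\<And>t. t \<in> {0..T} \<Longrightarrow> v t \<in> Xsp N p \<and> w t \<in> Xsp N p \<and> \<psi> t \<in> Xsp N p"
    and dv: "\<And>t j x. t \<in> {0..T} \<Longrightarrow> j \<in> {1..N} \<Longrightarrow> x \<in> {xs (j - 1)..xs j} \<Longrightarrow>
        ((\<lambda>s. poly (v s j) x) has_real_derivative poly (vt t j) x) (at t within {0..T})"
    and dw: "\<And>t j x. t \<in> {0..T} \<Longrightarrow> j \<in> {1..N} \<Longrightarrow> x \<in> {xs (j - 1)..xs j} \<Longrightarrow>
        ((\<lambda>s. poly (w s j) x) has_real_derivative poly (wt t j) x) (at t within {0..T})"
    and d\<psi>: "\<And>t j x. t \<in> {0..T} \<Longrightarrow> j \<in> {1..N} \<Longrightarrow> x \<in> {xs (j - 1)..xs j} \<Longrightarrow>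
        ((\<lambda>s. poly (\<psi> s j) x) has_real_derivative poly (\<psi>t t j) x) (at t within {0..T})"
    and eq1: "\<And>t \<phi>. t \<in> {0..T} \<Longrightarrow> \<phi> \<in> Xsp N p \<Longrightarrow>
        (\<Sum>j=1..N. cint xs j (\<lambda>x. poly (vt t j) x * poly (\<phi> j) x))
      + (\<Sum>j=1..N. cint xs j (\<lambda>x. cfun \<alpha> \<beta> (poly (\<psi> t j) x) * poly (w t j) x * poly (pderiv (\<phi> j)) x))
      - (\<Sum>j=1..N. cbar \<alpha> \<beta> xs N (\<psi> t) j * avg xs N (w t) j * trm xs N \<phi> j)
      + (\<Sum>j=1..N. cbar \<alpha> \<beta> xs N (\<psi> t) (j - 1) * avg xs N (w t) (j - 1) * trp xs N \<phi> (j - 1))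
      = (\<Sum>j=1..N. cint xs j (\<lambda>x. cfun \<alpha> \<beta> (poly (\<psi> t j) x) * poly (pderiv (w t j * \<phi> j)) x))
      - (\<Sum>j=1..N. cbar \<alpha> \<beta> xs N (\<psi> t) j * trm xs N (w t) j * trm xs N \<phi> j)
      + (\<Sum>j=1..N. cbar \<alpha> \<beta> xs N (\<psi> t) (j - 1) * trp xs N (w t) (j - 1) * trp xs N \<phi> (j - 1))"
    and eq2: "\<And>t \<eta>. t \<in> {0..T} \<Longrightarrow> \<eta> \<in> Xsp N p \<Longrightarrow>
        (\<Sum>j=1..N. cint xs j (\<lambda>x. poly (wt t j) x * poly (\<eta> j) x))
      + (\<Sum>j=1..N. cint xs j (\<lambda>x. cfun \<alpha> \<beta> (poly (\<psi> t j) x) * poly (v t j) x * poly (pderiv (\<eta> j)) x))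
      - (\<Sum>j=1..N. cbar \<alpha> \<beta> xs N (\<psi> t) j * avg xs N (v t) j * trm xs N \<eta> j)
      + (\<Sum>j=1..N. cbar \<alpha> \<beta> xs N (\<psi> t) (j - 1) * avg xs N (v t) (j - 1) * trp xs N \<eta> (j - 1))
      = 0"
    and eq3: "\<And>t \<zeta>. t \<in> {0..T} \<Longrightarrow> \<zeta> \<in> Xsp N p \<Longrightarrow>
        (\<Sum>j=1..N. cint xs j (\<lambda>x. poly (\<psi>t t j) x * poly (\<zeta> j) x))
      = (\<Sum>j=1..N. cint xs j (\<lambda>x. poly (v t j) x * poly (\<zeta> j) x))"
    and "t \<in> {0..T}"
  shows "((\<lambda>s. \<Sum>j=1..N. cint xs j (\<lambda>x. (poly (v s j) x)\<^sup>2 + (poly (w s j) x)\<^sup>2))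
           has_real_derivative 0) (at t within {0..T})"
proof -
  note tT = \<open>t \<in> {0..T}\<close>
  have N1: "N \<ge> 1" using \<open>mesh xs N\<close> unfolding mesh_def by simp
  have cells: "xs (j - 1) < xs j" if "j \<in> {1..N}" for j
  proof -
    have "j - 1 < N" "Suc (j - 1) = j" using that by auto
    thus ?thesis using \<open>mesh xs N\<close> unfolding mesh_def by metis
  qed
  show ?thesis
  proof (cases "at t within {0..T} = (bot :: real filter)")
    case True
    show ?thesis unfolding has_field_derivative_def has_derivative_within
      using True by (simp add: bounded_linear_mult_right)
  next
    case nb: False
    have degv: "\<And>s j. s \<in> {0..T} \<Longrightarrow> j \<in> {1..N} \<Longrightarrow> degree (v s j) \<le> p"
      and degw: "\<And>s j. s \<in> {0..T} \<Longrightarrow> j \<in> {1..N} \<Longrightarrow> degree (w s j) \<le> p"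
      using inX unfolding Xsp_def by auto
    have dvj: "((\<lambda>s. cint xs j (\<lambda>x. (poly (v s j) x)\<^sup>2)) has_real_derivative
         2 * cint xs j (\<lambda>x. poly (vt t j) x * poly (v t j) x)) (at t within {0..T})"
      if "j \<in> {1..N}" for j
      unfolding cint_def
      by (rule cell_deriv[OF cells[OF that] tT nb]) (auto intro: degv[OF _ that] dv[OF tT that])
    have dwj: "((\<lambda>s. cint xs j (\<lambda>x. (poly (w s j) x)\<^sup>2)) has_real_derivative
         2 * cint xs j (\<lambda>x. poly (wt t j) x * poly (w t j) x)) (at t within {0..T})"
      if "j \<in> {1..N}" for j
      unfolding cint_def
      by (rule cell_deriv[OF cells[OF that] tT nb]) (auto intro: degw[OF _ that] dw[OF tT that])
    have split: "cint xs j (\<lambda>x. (poly (v s j) x)\<^sup>2 + (poly (w s j) x)\<^sup>2)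
        = cint xs j (\<lambda>x. (poly (v s j) x)\<^sup>2) + cint xs j (\<lambda>x. (poly (w s j) x)\<^sup>2)" for s j
      unfolding cint_def
      by (rule integral_add) (auto intro!: integrable_continuous_interval continuous_intros)
    have D: "((\<lambda>s. \<Sum>j=1..N. cint xs j (\<lambda>x. (poly (v s j) x)\<^sup>2 + (poly (w s j) x)\<^sup>2))
           has_real_derivative (\<Sum>j=1..N. 2 * cint xs j (\<lambda>x. poly (vt t j) x * poly (v t j) x)
              + 2 * cint xs j (\<lambda>x. poly (wt t j) x * poly (w t j) x))) (at t within {0..T})"
      unfolding split by (intro DERIV_sum DERIV_add dvj dwj)
    define cb where "cb k = cbar \<alpha> \<beta> xs N (\<psi> t) k" for k
    define G where "G k = cb k * (trp xs N (w t) k * trm xs N (v t) k + trp xs N (v t) k * trm xs N (w t) k) / 2" for k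
    have G0: "G 0 = G N" using N1 unfolding G_def cb_def cbar_def trm_def trp_def by simp
    have tele: "(\<Sum>j=1..N. G (j - 1) - G j) = 0"
    proof -
      obtain n where n: "N = Suc n" using N1 by (cases N) auto
      have "(\<Sum>j=1..N. G (j - 1)) = (\<Sum>i=0..n. G i)"
        unfolding n by (simp only: One_nat_def sum.shift_bounds_cl_Suc_ivl) simp
      also have "\<dots> = G 0 + (\<Sum>i=1..n. G i)" by (simp add: sum.atLeast_Suc_atMost)
      also have "\<dots> = (\<Sum>j=1..N. G j)" unfolding n using G0 n by (simp add: add.commute)
      finally show ?thesis by (simp add: sum_subtractf)
    qed
    have vX: "v t \<in> Xsp N p" and wX: "w t \<in> Xsp N p" using inX[OF tT] by auto
    note e1 = eq1[OF tT vX] and e2 = eq2[OF tT wX]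
    have flux: "(- (\<Sum>j=1..N. cb j * avg xs N (w t) j * trm xs N (v t) j)
        + (\<Sum>j=1..N. cb (j - 1) * avg xs N (w t) (j - 1) * trp xs N (v t) (j - 1)))
      + (- (\<Sum>j=1..N. cb j * avg xs N (v t) j * trm xs N (w t) j)
        + (\<Sum>j=1..N. cb (j - 1) * avg xs N (v t) (j - 1) * trp xs N (w t) (j - 1)))
      - (- (\<Sum>j=1..N. cb j * trm xs N (w t) j * trm xs N (v t) j)
        + (\<Sum>j=1..N. cb (j - 1) * trp xs N (w t) (j - 1) * trp xs N (v t) (j - 1)))
      = (\<Sum>j=1..N. G (j - 1) - G j)"
    proof -
      have "(\<Sum>j=1..N. G (j - 1) - G j) = (\<Sum>j=1..N.
          - (cb j * avg xs N (w t) j * trm xs N (v t) j)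
        + (cb (j - 1) * avg xs N (w t) (j - 1) * trp xs N (v t) (j - 1))
        - (cb j * avg xs N (v t) j * trm xs N (w t) j)
        + (cb (j - 1) * avg xs N (v t) (j - 1) * trp xs N (w t) (j - 1))
        + (cb j * trm xs N (w t) j * trm xs N (v t) j)
        - (cb (j - 1) * trp xs N (w t) (j - 1) * trp xs N (v t) (j - 1)))"
        by (rule sum.cong) (simp_all add: G_def avg_def field_simps)
      thus ?thesis by (simp add: sum.distrib sum_subtractf sum_negf)
    qed
    have I: "(\<Sum>j=1..N. cint xs j (\<lambda>x. cfun \<alpha> \<beta> (poly (\<psi> t j) x) * poly (w t j) x * poly (pderiv (v t j)) x))
       + (\<Sum>j=1..N. cint xs j (\<lambda>x. cfun \<alpha> \<beta> (poly (\<psi> t j) x) * poly (v t j) x * poly (pderiv (w t j)) x))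
       = (\<Sum>j=1..N. cint xs j (\<lambda>x. cfun \<alpha> \<beta> (poly (\<psi> t j) x) * poly (pderiv (w t j * v t j)) x))"
      unfolding sum.distrib[symmetric]
    proof (rule sum.cong[OF refl])
      fix j
      show "cint xs j (\<lambda>x. cfun \<alpha> \<beta> (poly (\<psi> t j) x) * poly (w t j) x * poly (pderiv (v t j)) x)
          + cint xs j (\<lambda>x. cfun \<alpha> \<beta> (poly (\<psi> t j) x) * poly (v t j) x * poly (pderiv (w t j)) x)
          = cint xs j (\<lambda>x. cfun \<alpha> \<beta> (poly (\<psi> t j) x) * poly (pderiv (w t j * v t j)) x)"
        unfolding cint_def cfun_def
        by (subst integral_add[symmetric])
           (auto intro!: integrable_continuous_interval continuous_intros integral_cong
             simp: pderiv_mult algebra_simps)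
    qed
    have key: "(\<Sum>j=1..N. cint xs j (\<lambda>x. poly (vt t j) x * poly (v t j) x))
      + (\<Sum>j=1..N. cint xs j (\<lambda>x. poly (wt t j) x * poly (w t j) x)) = 0"
      using e1 e2 I flux tele unfolding cb_def by linarith
    have "(\<Sum>j=1..N. 2 * cint xs j (\<lambda>x. poly (vt t j) x * poly (v t j) x)
              + 2 * cint xs j (\<lambda>x. poly (wt t j) x * poly (w t j) x))
        = 2 * ((\<Sum>j=1..N. cint xs j (\<lambda>x. poly (vt t j) x * poly (v t j) x))
      + (\<Sum>j=1..N. cint xs j (\<lambda>x. poly (wt t j) x * poly (w t j) x)))"
      by (simp add: sum.distrib sum_distrib_left)
    with D key show ?thesis by simp
  qed
qed

end
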